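(* Let $\alpha>0$ and $F(t)=(1+t^{-\alpha})^{-1}$ for $t>0$, $F(0)=0$. A function $G\in\Delta_+$ is in the Boolean max-domain of attraction of $F$ if and only if the function $t\mapsto 1-\exp\big(1-G(t)^{-1}\big)$ is regularly varying of exponent $-\alpha$.
   Context: $\Delta_+$ is the set of functions $F:[0,\infty)\to[0,1]$ that are nondecreasing, right continuous and satisfy $\lim_{t\to\infty}F(t)=1$. Define $\sqcap$ on $[0,1]$ by $(x\sqcap y)^{-1}-1=(x^{-1}-1)+(y^{-1}-1)$ (conventions $0^{-1}=+\infty$, $(+\infty)^{-1}=0$, and $\exp(1-0^{-1})=0$), and the Boolean max-convolution of $F,G\in\Delta_+$ by $(F\boxed{\vee}G)(t)=F(t)\sqcap G(t)$; $G^{\boxed{\vee}n}$ denotes the $n$-fold Boolean max-convolution of $G$ with itself. $G\in\Delta_+$ is in the Boolean max-domain of attraction of $F\in\Delta_+$ if there exist $a_n>0$ ($n\in\mathbb{N}$) with $G^{\boxed{\vee}n}(a_nt)\to F(t)$ as $n\to\infty$ for all $t\ge0$. A function $h$ on $[0,\infty)$ is regularly varying of exponent $-\alpha$ if $\lim_{t\to+\infty}h(tx)/h(t)=x^{-\alpha}$ for all $x>0$. *)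

theory Defs
  imports Complex_Main
begin

definition Delta_plus :: "(real \<Rightarrow> real) \<Rightarrow> bool" where
  "Delta_plus F \<longleftrightarrow>
     mono_on {0..} F \<and>
     (\<forall>t\<ge>0. 0 \<le> F t \<and> F t \<le> 1) \<and>
     (\<forall>t\<ge>0. continuous (at_right t) F) \<and>
     (F \<longlongrightarrow> 1) at_top"

text \<open>Boolean max operation on [0,1]: (x \<sqinter> y)^-1 - 1 = (x^-1 - 1) + (y^-1 - 1),
  with 0^-1 = +\<infinity>, (+\<infinity>)^-1 = 0.\<close>
definition bmax :: "real \<Rightarrow> real \<Rightarrow> real" where
  "bmax x y = (if x = 0 \<or> y = 0 then 0 else 1 / (1 / x + 1 / y - 1))"

definition bmax_conv :: "(real \<Rightarrow> real) \<Rightarrow> (real \<Rightarrow> real) \<Rightarrow> (real \<Rightarrow> real)" where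
  "bmax_conv F G = (\<lambda>t. bmax (F t) (G t))"

text \<open>n-fold Boolean max-convolution power (n = 0 gives the neutral function 1;
  only n \<ge> 1 matters).\<close>
fun bmax_pow :: "nat \<Rightarrow> (real \<Rightarrow> real) \<Rightarrow> (real \<Rightarrow> real)" where
  "bmax_pow 0 G = (\<lambda>_. 1)"
| "bmax_pow (Suc 0) G = G"
| "bmax_pow (Suc (Suc n)) G = bmax_conv (bmax_pow (Suc n) G) G"

definition bool_max_domain_of_attraction :: "(real \<Rightarrow> real) \<Rightarrow> (real \<Rightarrow> real) \<Rightarrow> bool" where
  "bool_max_domain_of_attraction G F \<longleftrightarrow>
     (\<exists>a :: nat \<Rightarrow> real. (\<forall>n. a n > 0) \<and>
        (\<forall>t\<ge>0. (\<lambda>n. bmax_pow n G (a n * t)) \<longlonglongrightarrow> F t))"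

definition regularly_varying :: "real \<Rightarrow> (real \<Rightarrow> real) \<Rightarrow> bool" where
  "regularly_varying \<rho> h \<longleftrightarrow>
     (\<forall>x>0. ((\<lambda>t. h (t * x) / h t) \<longlongrightarrow> x powr \<rho>) at_top)"

text \<open>1 - exp(1 - y^-1) with the conventions 0^-1 = +\<infinity>, exp(1 - 0^-1) = 0.\<close>
definition one_minus_exp_inv :: "real \<Rightarrow> real" where
  "one_minus_exp_inv y = (if y = 0 then 1 else 1 - exp (1 - 1 / y))"

end

theory Submission
  imports Defs
begin


lemma frac_cancel_aux:
  fixes n1 n2 c d :: real
  assumes "n1 \<noteq> 0" "n2 \<noteq> 0" "d \<noteq> 0"
  shows "(n1 * c) / (n2 * d) * (n2 / n1) = c / d"
  using assms by (simp add: field_simps)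

lemma rv_from_seq:
  fixes q :: "real \<Rightarrow> real" and a :: "nat \<Rightarrow> real" and \<alpha> t0 x :: real
  assumes mono: "\<And>s t. t0 \<le> s \<Longrightarrow> s \<le> t \<Longrightarrow> q t \<le> q s"
    and pos: "\<And>s. t0 \<le> s \<Longrightarrow> q s > 0"
    and alim: "filterlim a at_top sequentially"
    and H: "\<And>t. t > 0 \<Longrightarrow> (\<lambda>n. real n * q (a n * t)) \<longlonglongrightarrow> t powr (-\<alpha>)"
    and x: "x > 0"
  shows "((\<lambda>s. q (s * x) / q s) \<longlongrightarrow> x powr (-\<alpha>)) at_top"
proof -
  define m where "m s = (LEAST n. s < a (Suc n))" for s
  have ex: "\<exists>n. s < a (Suc n)" for s
  proof -
    have "\<forall>\<^sub>F n in sequentially. s < a n" using alim by (simp add: filterlim_at_top_dense)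
    then obtain N where "\<And>n. n \<ge> N \<Longrightarrow> s < a n" by (auto simp: eventually_sequentially)
    then show ?thesis by (metis le_SucI order_refl)
  qed
  have m1: "s < a (Suc (m s))" for s unfolding m_def by (rule LeastI_ex[OF ex])
  have m2: "a (Suc k) \<le> s" if "k < m s" for k s
    using not_less_Least[OF that[unfolded m_def]] by simp
  have mlim: "filterlim m at_top at_top"
    unfolding filterlim_at_top
  proof
    fix N :: nat
    have "\<forall>\<^sub>F s in at_top. Max (a ` {..N}) \<le> s" by (rule eventually_ge_at_top)
    then show "\<forall>\<^sub>F s in at_top. N \<le> m s"
    proof (rule eventually_mono)
      fix s assume s: "Max (a ` {..N}) \<le> s"
      show "N \<le> m s"
      proof (rule ccontr)
        assume "\<not> N \<le> m s"
        then have "Suc (m s) \<in> {..N}" by simp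
        then have "a (Suc (m s)) \<le> Max (a ` {..N})" by simp
        with s m1[of s] show False by linarith
      qed
    qed
  qed
  have H1: "(\<lambda>n. real n * q (a n * 1)) \<longlonglongrightarrow> 1"
    using H[of 1] by simp
  have Ulim: "(\<lambda>k. (real k * q (a k * x)) / (real (Suc k) * q (a (Suc k) * 1)) * (real (Suc k) / real k))
      \<longlonglongrightarrow> x powr (-\<alpha>)"
    using tendsto_mult[OF tendsto_divide[OF H[OF x] LIMSEQ_Suc[OF H1]] LIMSEQ_Suc_n_over_n] by simp
  have Llim: "(\<lambda>k. (real (Suc k) * q (a (Suc k) * x)) / (real k * q (a k * 1)) * (real k / real (Suc k)))
      \<longlonglongrightarrow> x powr (-\<alpha>)"
    using tendsto_mult[OF tendsto_divide[OF LIMSEQ_Suc[OF H[OF x]] H1] LIMSEQ_n_over_Suc_n] by simp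
  have evs: "\<forall>\<^sub>F k in sequentially. 1 \<le> k \<and> t0 \<le> a k \<and> t0 / x \<le> a k"
    using alim eventually_ge_at_top[of "1::nat"]
    by (auto simp: filterlim_at_top intro!: eventually_conj)
  have evm: "\<forall>\<^sub>F s in at_top. 1 \<le> m s \<and> t0 \<le> a (m s) \<and> t0 / x \<le> a (m s)"
    using mlim evs unfolding filterlim_iff by blast
  have ev: "\<forall>\<^sub>F s in at_top. (1 \<le> m s \<and> t0 \<le> a (m s) \<and> t0 / x \<le> a (m s)) \<and> t0 \<le> s"
    using evm eventually_ge_at_top by (rule eventually_conj)
  show ?thesis
  proof (rule tendsto_sandwich[OF _ _ filterlim_compose[OF Llim mlim] filterlim_compose[OF Ulim mlim]])
    show "\<forall>\<^sub>F s in at_top. (\<lambda>k. (real (Suc k) * q (a (Suc k) * x)) / (real k * q (a k * 1)) * (real k / real (Suc k))) (m s)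
         \<le> q (s * x) / q s"
      using ev
    proof (rule eventually_mono)
      fix s assume h: "(1 \<le> m s \<and> t0 \<le> a (m s) \<and> t0 / x \<le> a (m s)) \<and> t0 \<le> s"
      define k where "k = m s"
      have k1: "1 \<le> k" and ak: "t0 \<le> a k" "t0 / x \<le> a k" and s0: "t0 \<le> s" using h by (auto simp: k_def)
      have akx: "t0 \<le> a k * x" using ak(2) x by (simp add: field_simps)
      have aks: "a k \<le> s" using m2[of "k - 1" s] k1 by (simp add: k_def)
      have sak: "s < a (Suc k)" using m1[of s] by (simp add: k_def)
      have eq: "(real (Suc k) * q (a (Suc k) * x)) / (real k * q (a k * 1)) * (real k / real (Suc k))
          = q (a (Suc k) * x) / q (a k)"
        using k1 pos[OF ak(1)] by (subst frac_cancel_aux) auto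
      have "q (a (Suc k) * x) / q (a k) \<le> q (s * x) / q s"
      proof (rule frac_le)
        show "0 \<le> q (s * x)" using pos[of "s*x"] akx aks x
          by (meson less_imp_le mult_right_mono order_trans)
        show "q (a (Suc k) * x) \<le> q (s * x)"
          by (rule mono) (use akx aks x sak in \<open>auto intro: mult_right_mono order_trans\<close>)
        show "0 < q s" using pos s0 by simp
        show "q s \<le> q (a k)" by (rule mono) (use ak aks in auto)
      qed
      then show "(\<lambda>k. (real (Suc k) * q (a (Suc k) * x)) / (real k * q (a k * 1)) * (real k / real (Suc k))) (m s)
         \<le> q (s * x) / q s" using eq by (simp add: k_def)
    qed
    show "\<forall>\<^sub>F s in at_top. q (s * x) / q s \<le>
      (\<lambda>k. (real k * q (a k * x)) / (real (Suc k) * q (a (Suc k) * 1)) * (real (Suc k) / real k)) (m s)"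
      using ev
    proof (rule eventually_mono)
      fix s assume h: "(1 \<le> m s \<and> t0 \<le> a (m s) \<and> t0 / x \<le> a (m s)) \<and> t0 \<le> s"
      define k where "k = m s"
      have k1: "1 \<le> k" and ak: "t0 \<le> a k" "t0 / x \<le> a k" and s0: "t0 \<le> s" using h by (auto simp: k_def)
      have akx: "t0 \<le> a k * x" using ak(2) x by (simp add: field_simps)
      have aks: "a k \<le> s" using m2[of "k - 1" s] k1 by (simp add: k_def)
      have sak: "s < a (Suc k)" using m1[of s] by (simp add: k_def)
      have eq: "(real k * q (a k * x)) / (real (Suc k) * q (a (Suc k) * 1)) * (real (Suc k) / real k)
          = q (a k * x) / q (a (Suc k))"
        using k1 pos[of "a (Suc k)"] s0 sak by (subst frac_cancel_aux) auto
      have "q (s * x) / q s \<le> q (a k * x) / q (a (Suc k))"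
      proof (rule frac_le)
        show "0 \<le> q (a k * x)" using pos[OF akx] by simp
        show "q (s * x) \<le> q (a k * x)"
          by (rule mono) (use akx aks x in \<open>auto intro: mult_right_mono\<close>)
        show "0 < q (a (Suc k))" using pos s0 sak by simp
        show "q (a (Suc k)) \<le> q s" by (rule mono) (use s0 sak in auto)
      qed
      then show "q (s * x) / q s \<le>
      (\<lambda>k. (real k * q (a k * x)) / (real (Suc k) * q (a (Suc k) * 1)) * (real (Suc k) / real k)) (m s)"
        using eq by (simp add: k_def)
    qed
  qed
qed



lemma seq_from_rv:
  fixes q :: "real \<Rightarrow> real" and \<alpha> t0 :: real
  assumes mono: "\<And>s t. t0 \<le> s \<Longrightarrow> s \<le> t \<Longrightarrow> q t \<le> q s"
    and pos: "\<And>s. t0 \<le> s \<Longrightarrow> q s > 0"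
    and t0: "t0 > 0"
    and qlim: "(q \<longlongrightarrow> 0) at_top"
    and RV: "\<And>x. x > 0 \<Longrightarrow> ((\<lambda>s. q (s * x) / q s) \<longlongrightarrow> x powr (-\<alpha>)) at_top"
  shows "\<exists>a. (\<forall>n. a n > 0) \<and> filterlim a at_top sequentially \<and>
           (\<forall>t>0. (\<lambda>n. real n * q (a n * t)) \<longlonglongrightarrow> t powr (-\<alpha>))"
proof -
  define S where "S n = {s. t0 \<le> s \<and> q s \<le> 1 / real n}" for n
  define a where "a n = (if n = 0 then 1 else Inf (S n))" for n
  have Sne: "S n \<noteq> {}" if "n \<ge> 1" for n
  proof -
    have "0 < 1 / real n" using that by simp
    then have "\<forall>\<^sub>F s in at_top. q s < 1 / real n" by (rule order_tendstoD(2)[OF qlim])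
    then obtain N where N: "\<And>s. s \<ge> N \<Longrightarrow> q s < 1 / real n" by (auto simp: eventually_at_top_linorder)
    have "max N t0 \<in> S n" using N[of "max N t0"] by (auto simp: S_def)
    then show ?thesis by auto
  qed
  have bdd: "bdd_below (S n)" for n by (auto simp: S_def bdd_below_def)
  have a_ge: "t0 \<le> a n" if "n \<ge> 1" for n
    using that Sne[OF that] by (auto simp: a_def S_def intro!: cInf_greatest)
  have a_le: "a n \<le> s" if "n \<ge> 1" "s \<in> S n" for n s
    using that bdd[of n] by (auto simp: a_def intro!: cInf_lower)
  have below: "q y > 1 / real n" if "n \<ge> 1" "t0 \<le> y" "y < a n" for n y
  proof (rule ccontr)
    assume "\<not> q y > 1 / real n"
    then have "y \<in> S n" using that by (auto simp: S_def)
    then have "a n \<le> y" using a_le that by blast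
    with that show False by simp
  qed
  have above: "q z \<le> 1 / real n" if n1: "n \<ge> 1" and nz: "a n < z" for n z
  proof -
    have "Inf (S n) < z" using n1 nz by (simp add: a_def)
    then obtain s where s: "s \<in> S n" "s < z" using cInf_less_iff[OF Sne[OF n1] bdd] by blast
    then have "q z \<le> q s" using mono[of s z] by (auto simp: S_def)
    with s show ?thesis by (auto simp: S_def)
  qed
  have apos: "a n > 0" for n
  proof (cases "n = 0")
    case True then show ?thesis by (simp add: a_def)
  next
    case False then show ?thesis using a_ge[of n] t0 by simp
  qed
  have alim: "filterlim a at_top sequentially"
    unfolding filterlim_at_top
  proof
    fix Z :: real
    define M where "M = max Z t0"
    have qM: "q M > 0" using pos[of M] by (simp add: M_def)
    have "\<forall>\<^sub>F n in sequentially. inverse (real n) < q M"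
      using order_tendstoD(2)[OF lim_inverse_n qM] .
    then have "\<forall>\<^sub>F n in sequentially. inverse (real n) < q M \<and> n \<ge> 1"
      using eventually_ge_at_top by (rule eventually_conj)
    then show "\<forall>\<^sub>F n in sequentially. Z \<le> a n"
    proof (rule eventually_mono)
      fix n :: nat assume h: "inverse (real n) < q M \<and> n \<ge> 1"
      have "M \<le> a n"
        unfolding a_def using h Sne[of n]
      proof (simp, intro cInf_greatest)
        fix s assume s: "s \<in> S n"
        show "M \<le> s"
        proof (rule ccontr)
          assume "\<not> M \<le> s"
          then have "q M \<le> q s" using s by (intro mono) (auto simp: S_def)
          with s h show False by (auto simp: S_def divide_inverse)
        qed
      qed auto
      then show "Z \<le> a n" by (simp add: M_def)
    qed
  qed
  have evt: "\<forall>\<^sub>F n in sequentially. n \<ge> 1 \<and> t0 / c \<le> a n" for c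
    using eventually_ge_at_top alim by (auto simp: filterlim_at_top intro!: eventually_conj)
  have ratio: "(\<lambda>n. q (a n * t) / q (a n * y)) \<longlonglongrightarrow> t powr (-\<alpha>) / y powr (-\<alpha>)"
    if "t > 0" "y > 0" for t y
  proof -
    have "(\<lambda>n. (q (a n * t) / q (a n)) / (q (a n * y) / q (a n))) \<longlonglongrightarrow> t powr (-\<alpha>) / y powr (-\<alpha>)"
      using tendsto_divide[OF filterlim_compose[OF RV[OF that(1)] alim] filterlim_compose[OF RV[OF that(2)] alim]]
        that by simp
    moreover have "\<forall>\<^sub>F n in sequentially. (q (a n * t) / q (a n)) / (q (a n * y) / q (a n)) = q (a n * t) / q (a n * y)"
      using evt[of 1]
    proof (rule eventually_mono)
      fix n assume "n \<ge> 1 \<and> t0 / 1 \<le> a n"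
      then have "q (a n) > 0" using pos by simp
      then show "(q (a n * t) / q (a n)) / (q (a n * y) / q (a n)) = q (a n * t) / q (a n * y)"
        by (simp add: field_simps)
    qed
    ultimately show ?thesis by (rule Lim_transform_eventually)
  qed
  have main: "(\<lambda>n. real n * q (a n * t)) \<longlonglongrightarrow> t powr (-\<alpha>)" if t: "t > 0" for t
  proof (rule order_tendstoI)
    fix b assume b: "b > t powr (-\<alpha>)"
    have "((\<lambda>x. t powr (-\<alpha>) / x powr (-\<alpha>)) \<longlongrightarrow> t powr (-\<alpha>) / 1 powr (-\<alpha>)) (at_right 1)"
      by (intro tendsto_intros) auto
    then have "\<forall>\<^sub>F x in at_right 1. t powr (-\<alpha>) / x powr (-\<alpha>) < b"
      using b by (intro order_tendstoD(2)) auto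
    then obtain b' where b': "b' > 1" "\<And>y. y > 1 \<Longrightarrow> y < b' \<Longrightarrow> t powr (-\<alpha>) / y powr (-\<alpha>) < b"
      by (auto simp: eventually_at_right[of 1 2])
    define x where "x = (1 + b') / 2"
    have x: "x > 1" "t powr (-\<alpha>) / x powr (-\<alpha>) < b" using b' by (auto simp: x_def)
    have "\<forall>\<^sub>F n in sequentially. q (a n * t) / q (a n * x) < b"
      using order_tendstoD(2)[OF ratio[OF t, of x] x(2)] x by simp
    then have "\<forall>\<^sub>F n in sequentially. q (a n * t) / q (a n * x) < b \<and> (n \<ge> 1 \<and> t0 / t \<le> a n)"
      using evt[of t] by (rule eventually_conj)
    then show "\<forall>\<^sub>F n in sequentially. real n * q (a n * t) < b"
    proof (rule eventually_mono)
      fix n assume h: "q (a n * t) / q (a n * x) < b \<and> (n \<ge> 1 \<and> t0 / t \<le> a n)"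
      have n1: "n \<ge> 1" using h by simp
      have ant: "t0 \<le> a n * t" using h t by (simp add: field_simps)
      have anx: "a n < a n * x" using apos[of n] x by simp
      have qx: "q (a n * x) \<le> 1 / real n" using above[OF n1 anx] .
      have qxpos: "q (a n * x) > 0" using pos a_ge[OF n1] anx by simp
      have qt: "q (a n * t) > 0" using pos ant by simp
      have "real n * q (a n * t) = (real n * q (a n * x)) * (q (a n * t) / q (a n * x))"
        using qxpos by simp
      also have "\<dots> \<le> 1 * (q (a n * t) / q (a n * x))"
      proof (rule mult_right_mono)
        show "real n * q (a n * x) \<le> 1" using qx n1 by (simp add: field_simps)
        show "0 \<le> q (a n * t) / q (a n * x)" using qt qxpos by simp
      qed
      finally show "real n * q (a n * t) < b" using h by simp
    qed
  next
    fix b assume b: "b < t powr (-\<alpha>)"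
    have "((\<lambda>x. t powr (-\<alpha>) / x powr (-\<alpha>)) \<longlongrightarrow> t powr (-\<alpha>) / 1 powr (-\<alpha>)) (at_left 1)"
      by (intro tendsto_intros) auto
    then have "\<forall>\<^sub>F x in at_left 1. b < t powr (-\<alpha>) / x powr (-\<alpha>)"
      using b by (intro order_tendstoD(1)) auto
    then obtain b' where b': "b' < 1" "\<And>y. y > b' \<Longrightarrow> y < 1 \<Longrightarrow> b < t powr (-\<alpha>) / y powr (-\<alpha>)"
      by (auto simp: eventually_at_left[of 0 1])
    define y where "y = (max b' 0 + 1) / 2"
    have y: "y > 0" "y < 1" "b < t powr (-\<alpha>) / y powr (-\<alpha>)" using b' by (auto simp: y_def)
    have "\<forall>\<^sub>F n in sequentially. b < q (a n * t) / q (a n * y)"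
      using order_tendstoD(1)[OF ratio[OF t y(1)] y(3)] .
    then have "\<forall>\<^sub>F n in sequentially. b < q (a n * t) / q (a n * y) \<and> (n \<ge> 1 \<and> t0 / (min t y) \<le> a n)"
      using evt[of "min t y"] by (rule eventually_conj)
    then show "\<forall>\<^sub>F n in sequentially. b < real n * q (a n * t)"
    proof (rule eventually_mono)
      fix n assume h: "b < q (a n * t) / q (a n * y) \<and> (n \<ge> 1 \<and> t0 / (min t y) \<le> a n)"
      have n1: "n \<ge> 1" using h by simp
      have mp: "min t y > 0" using t y by simp
      have am: "t0 \<le> a n * min t y" using h mp by (simp add: field_simps)
      have ant: "t0 \<le> a n * t" using am apos[of n] by (smt (verit) mult_left_mono min.cobounded1)
      have any: "t0 \<le> a n * y" using am apos[of n] by (smt (verit) mult_left_mono min.cobounded2)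
      have any2: "a n * y < a n" using apos[of n] y by simp
      have qy: "q (a n * y) > 1 / real n" using below[OF n1 any any2] .
      have qypos: "q (a n * y) > 0" using pos any by simp
      have qt: "q (a n * t) > 0" using pos ant by simp
      have "b < 1 * (q (a n * t) / q (a n * y))" using h by simp
      also have "\<dots> \<le> (real n * q (a n * y)) * (q (a n * t) / q (a n * y))"
      proof (rule mult_right_mono)
        show "1 \<le> real n * q (a n * y)" using qy n1 by (simp add: field_simps)
        show "0 \<le> q (a n * t) / q (a n * y)" using qt qypos by simp
      qed
      also have "\<dots> = real n * q (a n * t)" using qypos by simp
      finally show "b < real n * q (a n * t)" .
    qed
  qed
  show ?thesis using apos alim main by blast
qed



lemma bmax_pow_zero: "G t = 0 \<Longrightarrow> bmax_pow (Suc n) G t = 0"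
proof (induction n)
  case 0 then show ?case by simp
next
  case (Suc n) then show ?case by (simp add: bmax_conv_def bmax_def)
qed

lemma bmax_pow_pos:
  assumes "0 < G t" "G t \<le> 1"
  shows "bmax_pow (Suc n) G t = 1 / (1 + real (Suc n) * (1 / G t - 1))"
proof (induction n)
  case 0 then show ?case using assms by simp
next
  case (Suc n)
  define g where "g = G t"
  have g: "0 < g" "g \<le> 1" using assms by (auto simp: g_def)
  have q0: "0 \<le> 1 / g - 1" using g by (simp add: field_simps)
  have d: "1 + real (Suc n) * (1 / g - 1) > 0" using q0 by (smt (verit) mult_nonneg_nonneg of_nat_0_le_iff)
  have "bmax_pow (Suc (Suc n)) G t = bmax (1 / (1 + real (Suc n) * (1 / g - 1))) g"
    using Suc by (simp add: bmax_conv_def g_def)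
  also have "\<dots> = 1 / ((1 + real (Suc n) * (1 / g - 1)) + 1 / g - 1)"
    using d g by (simp add: bmax_def)
  also have "\<dots> = 1 / (1 + real (Suc (Suc n)) * (1 / g - 1))"
    by (simp add: algebra_simps)
  finally show ?case by (simp add: g_def)
qed

lemma exp_ratio_lim: "((\<lambda>u::real. (1 - exp (-u)) / u) \<longlongrightarrow> 1) (at 0)"
proof -
  have "((\<lambda>u::real. exp (-u)) has_field_derivative -1) (at 0)"
    by (auto intro!: derivative_eq_intros)
  then have "((\<lambda>h. (exp (-(0+h)) - exp (-0)) / h) \<longlongrightarrow> -1) (at (0::real))"
    by (rule DERIV_D)
  then have "((\<lambda>h. - ((exp (-(0+h)) - exp (-0)) / h)) \<longlongrightarrow> - (-1)) (at (0::real))"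
    by (rule tendsto_minus)
  then show ?thesis by (simp add: minus_divide_left)
qed

lemma ratio_aux1:
  fixes A B C D :: real
  assumes "A \<noteq> 0" "B \<noteq> 0" "C \<noteq> 0" "D \<noteq> 0"
  shows "(A / B) * (B / C) / (A / D) = D / C"
  using assms by (simp add: field_simps)

lemma ratio_aux2:
  fixes A B C D :: real
  assumes "A \<noteq> 0" "B \<noteq> 0" "C \<noteq> 0" "D \<noteq> 0"
  shows "(A / B) * (B / C) / (D / C) = A / D"
  using assms by (simp add: field_simps)

lemma rv_equiv:
  fixes q h :: "real \<Rightarrow> real" and x L :: real
  assumes qpos: "\<forall>\<^sub>F t in at_top. q t > 0" and qlim: "(q \<longlongrightarrow> 0) at_top"
    and heq: "\<forall>\<^sub>F t in at_top. h t = 1 - exp (- q t)" and x: "x > 0"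
  shows "((\<lambda>t. h (t * x) / h t) \<longlongrightarrow> L) at_top \<longleftrightarrow> ((\<lambda>t. q (t * x) / q t) \<longlongrightarrow> L) at_top"
proof -
  have qat: "filterlim q (at 0) at_top"
    unfolding filterlim_at using qpos qlim by (auto elim: eventually_mono)
  have r1: "((\<lambda>t. (1 - exp (- q t)) / q t) \<longlongrightarrow> 1) at_top"
    using filterlim_compose[OF exp_ratio_lim qat] .
  have ev1: "\<forall>\<^sub>F t in at_top. (1 - exp (- q t)) / q t = h t / q t" using heq by (auto elim: eventually_mono)
  have rlim: "((\<lambda>t. h t / q t) \<longlongrightarrow> 1) at_top"
    by (rule Lim_transform_eventually[OF r1 ev1])
  have xlim: "filterlim (\<lambda>t. t * x) at_top at_top"
    using filterlim_tendsto_pos_mult_at_top[OF tendsto_const x filterlim_ident]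
    by (simp add: mult.commute)
  have rxlim: "((\<lambda>t. h (t * x) / q (t * x)) \<longlongrightarrow> 1) at_top"
    using filterlim_compose[OF rlim xlim] .
  have evx: "\<forall>\<^sub>F t in at_top. P (t * x)" if "\<forall>\<^sub>F t in at_top. P t" for P
    using xlim that unfolding filterlim_iff by blast
  have hpos: "\<forall>\<^sub>F t in at_top. h t > 0"
    using qpos heq by eventually_elim simp
  have good: "\<forall>\<^sub>F t in at_top. q t > 0 \<and> h t > 0 \<and> q (t*x) > 0 \<and> h (t*x) > 0"
    using qpos hpos evx[OF qpos] evx[OF hpos] by eventually_elim auto
  show ?thesis
  proof
    assume H: "((\<lambda>t. h (t * x) / h t) \<longlongrightarrow> L) at_top"
    have "((\<lambda>t. (h (t * x) / h t) * (h t / q t) / (h (t * x) / q (t * x))) \<longlongrightarrow> L * 1 / 1) at_top"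
      by (rule tendsto_divide[OF tendsto_mult[OF H rlim] rxlim]) simp
    then have A: "((\<lambda>t. (h (t * x) / h t) * (h t / q t) / (h (t * x) / q (t * x))) \<longlongrightarrow> L) at_top" by simp
    have "\<forall>\<^sub>F t in at_top. (h (t * x) / h t) * (h t / q t) / (h (t * x) / q (t * x)) = q (t * x) / q t"
      using good by eventually_elim (simp add: ratio_aux1)
    then show "((\<lambda>t. q (t * x) / q t) \<longlongrightarrow> L) at_top" by (rule Lim_transform_eventually[OF A])
  next
    assume H: "((\<lambda>t. q (t * x) / q t) \<longlongrightarrow> L) at_top"
    have "((\<lambda>t. (h (t * x) / q (t * x)) * (q (t * x) / q t) / (h t / q t)) \<longlongrightarrow> 1 * L / 1) at_top"
      by (rule tendsto_divide[OF tendsto_mult[OF rxlim H] rlim]) simp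
    then have A: "((\<lambda>t. (h (t * x) / q (t * x)) * (q (t * x) / q t) / (h t / q t)) \<longlongrightarrow> L) at_top" by simp
    have "\<forall>\<^sub>F t in at_top. (h (t * x) / q (t * x)) * (q (t * x) / q t) / (h t / q t) = h (t * x) / h t"
      using good by eventually_elim (simp add: ratio_aux2)
    then show "((\<lambda>t. h (t * x) / h t) \<longlongrightarrow> L) at_top" by (rule Lim_transform_eventually[OF A])
  qed
qed


lemma gl1: "0 < (g::real) \<Longrightarrow> 0 < 1 / g - 1 \<Longrightarrow> g < 1"
  by (simp add: field_simps)

theorem corollary4p2:
  fixes \<alpha> :: real and F G :: "real \<Rightarrow> real"
  assumes "\<alpha> > 0"
    and "\<And>t. F t = (if t > 0 then 1 / (1 + t powr (- \<alpha>)) else 0)"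
    and "Delta_plus G"
  shows "bool_max_domain_of_attraction G F \<longleftrightarrow>
         regularly_varying (- \<alpha>) (\<lambda>t. one_minus_exp_inv (G t))"
proof -
  note apos_ = assms(1)
  note Fdef = assms(2)
  have monoG: "G s \<le> G t" if "0 \<le> s" "s \<le> t" for s t
    using assms(3) that unfolding Delta_plus_def mono_on_def by auto
  have G01: "0 \<le> G t" "G t \<le> 1" if "0 \<le> t" for t
    using assms(3) that unfolding Delta_plus_def by auto
  have rc: "continuous (at_right 0) G" using assms(3) unfolding Delta_plus_def by auto
  have Glim: "(G \<longlongrightarrow> 1) at_top" using assms(3) unfolding Delta_plus_def by auto
  have "\<forall>\<^sub>F t in at_top. 1/2 < G t" by (rule order_tendstoD(1)[OF Glim]) simp
  then obtain t1 where t1: "\<And>t. t \<ge> t1 \<Longrightarrow> 1/2 < G t" by (auto simp: eventually_at_top_linorder)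
  define t0 where "t0 = max 1 t1"
  have t0: "t0 > 0" by (simp add: t0_def)
  have Gt0: "G t > 0" if "t \<ge> t0" for t using t1[of t] that by (simp add: t0_def)
  define q where "q t = 1 / G t - 1" for t
  define h where "h t = one_minus_exp_inv (G t)" for t
  have hh: "h = (\<lambda>t. one_minus_exp_inv (G t))" by (simp add: h_def fun_eq_iff)
  have qmono: "q t \<le> q s" if "0 \<le> s" "s \<le> t" "0 < G s" for s t
  proof -
    have "1 / G t \<le> 1 / G s" using monoG[OF that(1,2)] that(3) by (intro divide_left_mono) auto
    then show ?thesis by (simp add: q_def)
  qed
  have qmono0: "q t \<le> q s" if "t0 \<le> s" "s \<le> t" for s t
    using qmono[of s t] that Gt0[of s] t0 by simp
  have qlim: "(q \<longlongrightarrow> 0) at_top"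
    unfolding q_def using tendsto_diff[OF tendsto_divide[OF tendsto_const Glim] tendsto_const, of 1 1] by simp
  have heq: "\<forall>\<^sub>F t in at_top. h t = 1 - exp (- q t)"
    using eventually_ge_at_top[of t0]
  proof (rule eventually_mono)
    fix t assume "t0 \<le> t"
    then have "G t \<noteq> 0" using Gt0 by force
    then show "h t = 1 - exp (- q t)" by (simp add: h_def q_def one_minus_exp_inv_def)
  qed
  have Gpow: "bmax_pow n G t = 1 / (1 + real n * q t)" if "n \<ge> 1" "0 \<le> t" "0 < G t" for n t
    using bmax_pow_pos[of G t "n - 1"] that G01[OF that(2)] by (simp add: q_def)
  have qposP: "t0 \<le> s \<Longrightarrow> q s > 0" if P: "\<forall>t\<ge>0. G t < 1" for s
  proof -
    assume s: "t0 \<le> s"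
    have "0 < G s" "G s < 1" using Gt0[OF s] P t0 s by auto
    then show "q s > 0" by (simp add: q_def)
  qed
  have RVequiv: "regularly_varying (- \<alpha>) h \<longleftrightarrow> (\<forall>x>0. ((\<lambda>t. q (t * x) / q t) \<longlongrightarrow> x powr (-\<alpha>)) at_top)"
    if P: "\<forall>t\<ge>0. G t < 1"
  proof -
    have "\<forall>\<^sub>F t in at_top. q t > 0" using eventually_ge_at_top[of t0]
      by (rule eventually_mono) (rule qposP[OF P])
    then show ?thesis unfolding regularly_varying_def using rv_equiv[OF _ qlim heq] by blast
  qed
  show ?thesis
  proof
    assume "bool_max_domain_of_attraction G F"
    then obtain a where apos: "\<And>n. a n > 0" and conv: "\<And>t. t \<ge> 0 \<Longrightarrow> (\<lambda>n. bmax_pow n G (a n * t)) \<longlonglongrightarrow> F t"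
      unfolding bool_max_domain_of_attraction_def by blast
    have evG: "\<forall>\<^sub>F n in sequentially. n \<ge> 1 \<and> 0 < G (a n * t)" if t: "t > 0" for t
    proof -
      have "0 < F t" using Fdef[of t] t by (simp add: powr_def add_pos_pos)
      then have "\<forall>\<^sub>F n in sequentially. 0 < bmax_pow n G (a n * t)"
        using order_tendstoD(1)[OF conv[of t]] t by simp
      then show ?thesis using eventually_ge_at_top[of "1::nat"]
      proof eventually_elim
        case (elim n)
        have nn: "0 \<le> a n * t" using apos[of n] t by simp
        have "G (a n * t) \<noteq> 0"
        proof
          assume "G (a n * t) = 0"
          then have "bmax_pow (Suc (n - 1)) G (a n * t) = 0" by (rule bmax_pow_zero)
          with elim show False by simp
        qed
        with G01[OF nn] elim show ?case by simp
      qed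
    qed
    have Hq: "(\<lambda>n. real n * q (a n * t)) \<longlonglongrightarrow> t powr (-\<alpha>)" if t: "t > 0" for t
    proof -
      have Ft: "F t = 1 / (1 + t powr (-\<alpha>))" using Fdef[of t] t by simp
      have dp: "1 + t powr (-\<alpha>) > 0" by (smt (verit) powr_ge_zero)
      have Fpos: "F t \<noteq> 0" using Ft dp by simp
      have "(\<lambda>n. 1 / bmax_pow n G (a n * t) - 1) \<longlonglongrightarrow> 1 / F t - 1"
        using conv[of t] t Fpos by (intro tendsto_intros) auto
      moreover have "1 / F t - 1 = t powr (-\<alpha>)" using Ft dp by simp
      ultimately have L: "(\<lambda>n. 1 / bmax_pow n G (a n * t) - 1) \<longlonglongrightarrow> t powr (-\<alpha>)"
        by simp
      have "\<forall>\<^sub>F n in sequentially. 1 / bmax_pow n G (a n * t) - 1 = real n * q (a n * t)"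
        using evG[OF t]
      proof (rule eventually_mono)
        fix n assume h: "n \<ge> 1 \<and> 0 < G (a n * t)"
        have nn: "0 \<le> a n * t" using apos[of n] t by simp
        show "1 / bmax_pow n G (a n * t) - 1 = real n * q (a n * t)"
          using Gpow[of n "a n * t"] h nn by simp
      qed
      then show ?thesis by (rule Lim_transform_eventually[OF L])
    qed
    have evq: "\<forall>\<^sub>F n in sequentially. n \<ge> 1 \<and> 0 < G (a n * t) \<and> 0 < q (a n * t)" if t: "t > 0" for t
    proof -
      have "\<forall>\<^sub>F n in sequentially. 0 < real n * q (a n * t)"
        by (rule order_tendstoD(1)[OF Hq[OF t]]) (use t in simp)
      then show ?thesis using evG[OF t]
      proof eventually_elim
        case (elim n) then show ?case by (simp add: zero_less_mult_iff)
      qed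
    qed
    have qa0: "(\<lambda>n. q (a n)) \<longlonglongrightarrow> 0"
    proof -
      have "(\<lambda>n. (real n * q (a n * 1)) * inverse (real n)) \<longlonglongrightarrow> 1 * 0"
        using tendsto_mult[OF Hq[of 1] lim_inverse_n] by simp
      moreover have "\<forall>\<^sub>F n in sequentially. (real n * q (a n * 1)) * inverse (real n) = q (a n)"
        using eventually_ge_at_top[of "1::nat"] by (rule eventually_mono) (simp add: field_simps)
      ultimately show ?thesis by (simp add: Lim_transform_eventually)
    qed
    have P: "\<forall>t\<ge>0. G t < 1"
    proof (rule ccontr)
      assume "\<not> (\<forall>t\<ge>0. G t < 1)"
      then obtain T where T: "T \<ge> 0" "G T = 1" using G01 by force
      have small: "\<forall>\<^sub>F n in sequentially. a n * t < T" if t: "t > 0" for t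
        using evq[OF t]
      proof (rule eventually_mono)
        fix n assume h: "n \<ge> 1 \<and> 0 < G (a n * t) \<and> 0 < q (a n * t)"
        then have "G (a n * t) < 1" by (intro gl1) (auto simp: q_def)
        show "a n * t < T"
        proof (rule ccontr)
          assume "\<not> a n * t < T"
          then have "G T \<le> G (a n * t)" using T by (intro monoG) auto
          with T \<open>G (a n * t) < 1\<close> show False by simp
        qed
      qed
      have a0: "a \<longlonglongrightarrow> 0"
      proof (rule order_tendstoI)
        fix b :: real assume "b < 0" then show "\<forall>\<^sub>F n in sequentially. b < a n"
          using apos by (intro always_eventually allI) (meson less_trans)
      next
        fix b :: real assume b: "b > 0"
        have tp: "(T + 1) / b > 0" using b T by simp
        show "\<forall>\<^sub>F n in sequentially. a n < b"
          using small[OF tp]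
        proof (rule eventually_mono)
          fix n assume "a n * ((T + 1) / b) < T"
          then have "a n * (T + 1) < T * b" using b by (simp add: field_simps)
          moreover have "T * b < (T + 1) * b" using b by simp
          ultimately have "a n * (T + 1) < b * (T + 1)" by (simp add: algebra_simps)
          then show "a n < b" using T by (simp add: mult_less_cancel_right)
        qed
      qed
      have ar: "filterlim a (at_right 0) sequentially"
        by (rule tendsto_imp_filterlim_at_right[OF a0]) (use apos in simp)
      have rc': "(G \<longlongrightarrow> G 0) (at_right 0)" using rc by (simp add: continuous_within)
      have L1: "(\<lambda>n. G (a n)) \<longlonglongrightarrow> G 0" using filterlim_compose[OF rc' ar] .
      have L2: "(\<lambda>n. G (a n)) \<longlonglongrightarrow> 1"
      proof -
        have "(\<lambda>n. 1 / (1 + q (a n))) \<longlonglongrightarrow> 1 / (1 + 0)"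
          by (intro tendsto_intros qa0) simp
        moreover have "\<forall>\<^sub>F n in sequentially. 1 / (1 + q (a n)) = G (a n)"
          using evq[OF zero_less_one] by (auto elim!: eventually_mono simp: q_def)
        ultimately show ?thesis by (simp add: Lim_transform_eventually)
      qed
      have G0: "G 0 = 1" using LIMSEQ_unique[OF L1 L2] .
      have "\<forall>\<^sub>F n in sequentially. False"
        using evq[OF zero_less_one]
      proof (rule eventually_mono)
        fix n assume h: "n \<ge> 1 \<and> 0 < G (a n * 1) \<and> 0 < q (a n * 1)"
        then have "G (a n) < 1" by (intro gl1) (auto simp: q_def)
        moreover have "G 0 \<le> G (a n)" using apos[of n] by (intro monoG) auto
        ultimately show False using G0 by simp
      qed
      then show False by simp
    qed
    have qpos: "\<And>s. t0 \<le> s \<Longrightarrow> q s > 0" using qposP[OF P] by blast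
    have alim: "filterlim a at_top sequentially"
      unfolding filterlim_at_top
    proof
      fix Z :: real
      define M where "M = max Z t0"
      have qM: "q M > 0" using qpos[of M] by (simp add: M_def)
      have "\<forall>\<^sub>F n in sequentially. q (a n) < q M" by (rule order_tendstoD(2)[OF qa0 qM])
      then show "\<forall>\<^sub>F n in sequentially. Z \<le> a n" using evq[OF zero_less_one]
      proof eventually_elim
        case (elim n)
        show ?case
        proof (rule ccontr)
          assume "\<not> Z \<le> a n"
          then have "a n \<le> M" by (simp add: M_def)
          then have "q M \<le> q (a n)" using elim apos[of n] by (intro qmono) auto
          with elim show False by simp
        qed
      qed
    qed
    have "\<forall>x>0. ((\<lambda>t. q (t * x) / q t) \<longlongrightarrow> x powr (-\<alpha>)) at_top"
      using rv_from_seq[OF qmono0 qpos alim Hq] by blast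
    then show "regularly_varying (- \<alpha>) (\<lambda>t. one_minus_exp_inv (G t))"
      using RVequiv[OF P] by (simp add: hh)
  next
    assume RV: "regularly_varying (- \<alpha>) (\<lambda>t. one_minus_exp_inv (G t))"
    have P: "\<forall>t\<ge>0. G t < 1"
    proof (rule ccontr)
      assume "\<not> (\<forall>t\<ge>0. G t < 1)"
      then obtain T where T: "T \<ge> 0" "G T = 1" using G01 by force
      have h0: "h t = 0" if "t \<ge> T" for t
      proof -
        have "G T \<le> G t" using T that by (intro monoG) auto
        then have "G t = 1" using G01[of t] T that by simp
        then show ?thesis by (simp add: h_def one_minus_exp_inv_def)
      qed
      have L: "((\<lambda>t. h (t * 2) / h t) \<longlongrightarrow> 2 powr (-\<alpha>)) at_top"
        using RV unfolding regularly_varying_def h_def by simp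
      have "\<forall>\<^sub>F t in at_top. 0 = h (t * 2) / h t"
        using eventually_ge_at_top[of T] by (rule eventually_mono) (simp add: h0)
      then have L0: "((\<lambda>t. h (t * 2) / h t) \<longlongrightarrow> 0) at_top"
        by (rule Lim_transform_eventually[OF tendsto_const])
      have "2 powr (-\<alpha>) = (0::real)" using tendsto_unique[OF _ L L0] by simp
      then show False by simp
    qed
    have qpos: "\<And>s. t0 \<le> s \<Longrightarrow> q s > 0" using qposP[OF P] by blast
    have RVq: "\<And>x. x > 0 \<Longrightarrow> ((\<lambda>s. q (s * x) / q s) \<longlongrightarrow> x powr (-\<alpha>)) at_top"
      using RVequiv[OF P] RV by (simp add: hh)
    obtain a where apos: "\<And>n. a n > 0" and alim: "filterlim a at_top sequentially"
      and Hq: "\<And>t. t > 0 \<Longrightarrow> (\<lambda>n. real n * q (a n * t)) \<longlonglongrightarrow> t powr (-\<alpha>)"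
      using seq_from_rv[OF qmono0 qpos t0 qlim RVq] by blast
    show "bool_max_domain_of_attraction G F"
      unfolding bool_max_domain_of_attraction_def
    proof (intro exI[of _ a] conjI)
      show "\<forall>n. a n > 0" using apos by blast
    next
      show "\<forall>t\<ge>0. (\<lambda>n. bmax_pow n G (a n * t)) \<longlonglongrightarrow> F t"
    proof (intro allI impI)
      fix t :: real assume t: "0 \<le> t"
      show "(\<lambda>n. bmax_pow n G (a n * t)) \<longlonglongrightarrow> F t"
      proof (cases "t = 0")
        case True
        have F0: "F t = 0" using Fdef[of t] True by simp
        show ?thesis
        proof (cases "G 0 = 0")
          case True
          have "\<forall>\<^sub>F n in sequentially. 0 = bmax_pow n G (a n * t)"
            using eventually_ge_at_top[of "1::nat"]
          proof (rule eventually_mono)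
            fix n :: nat assume "n \<ge> 1"
            then have "bmax_pow (Suc (n - 1)) G 0 = 0" using bmax_pow_zero[of G 0, OF True] by blast
            then show "0 = bmax_pow n G (a n * t)" using \<open>n \<ge> 1\<close> \<open>t = 0\<close> by simp
          qed
          then show ?thesis unfolding F0 by (rule Lim_transform_eventually[OF tendsto_const])
        next
          case False
          have g0: "0 < G 0" "G 0 < 1" using False G01[of 0] P by auto
          have q0: "q 0 > 0" using g0 by (simp add: q_def)
          have "filterlim (\<lambda>n. q 0 * real n) at_top sequentially"
            by (rule filterlim_tendsto_pos_mult_at_top[OF tendsto_const q0 filterlim_real_sequentially])
          then have "filterlim (\<lambda>n. 1 + real n * q 0) at_top sequentially"
            by (intro filterlim_tendsto_add_at_top[OF tendsto_const]) (simp add: mult.commute)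
          then have Z: "(\<lambda>n. 1 / (1 + real n * q 0)) \<longlonglongrightarrow> 0"
            by (intro tendsto_divide_0[OF tendsto_const] filterlim_at_top_imp_at_infinity)
          have "\<forall>\<^sub>F n in sequentially. 1 / (1 + real n * q 0) = bmax_pow n G (a n * t)"
            using eventually_ge_at_top[of "1::nat"]
          proof (rule eventually_mono)
            fix n :: nat assume "n \<ge> 1"
            then show "1 / (1 + real n * q 0) = bmax_pow n G (a n * t)"
              using Gpow[of n 0] g0 \<open>t = 0\<close> by simp
          qed
          then show ?thesis unfolding F0 by (rule Lim_transform_eventually[OF Z])
        qed
      next
        case False
        then have tp: "t > 0" using t by simp
        have "(\<lambda>n. 1 / (1 + real n * q (a n * t))) \<longlonglongrightarrow> 1 / (1 + t powr (-\<alpha>))"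
          using powr_ge_zero[of t "-\<alpha>"] by (intro tendsto_intros Hq[OF tp]) linarith
        then have L: "(\<lambda>n. 1 / (1 + real n * q (a n * t))) \<longlonglongrightarrow> F t" using Fdef[of t] tp by simp
        have "\<forall>\<^sub>F n in sequentially. n \<ge> 1 \<and> t0 / t \<le> a n"
          using eventually_ge_at_top alim by (auto simp: filterlim_at_top intro!: eventually_conj)
        then have "\<forall>\<^sub>F n in sequentially. 1 / (1 + real n * q (a n * t)) = bmax_pow n G (a n * t)"
        proof (rule eventually_mono)
          fix n assume h: "n \<ge> 1 \<and> t0 / t \<le> a n"
          then have "t0 \<le> a n * t" using tp by (simp add: field_simps)
          then show "1 / (1 + real n * q (a n * t)) = bmax_pow n G (a n * t)"
            using Gpow[of n "a n * t"] Gt0 h t0 by simp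
        qed
        then show ?thesis by (rule Lim_transform_eventually[OF L])
      qed
    qed
    qed
  qed
qed

end
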